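(* Identify the letters $a_i$ with the positive integers $i$. Let $\mathbf{NCQSym}$ be the Hopf algebra with basis $(\mathbf{M}_u)$ indexed by packed words $u$ (including the empty word), where $\mathbf{M}_u=\sum_{\mathrm{tass}(w)=u} w\in\mathbb{K}\langle A\rangle$, with product the product of $\mathbb{K}\langle A\rangle$ and coproduct $\Delta\mathbf{M}_u=\sum_{k=0}^{m}\mathbf{M}_{u_{\le k}}\otimes\mathbf{M}_{\mathrm{tass}(u_{>k})}$, where $m$ is the greatest letter of $u$, $u_{\le k}$ (resp. $u_{>k}$) is the subword of $u$ formed by its letters $\le k$ (resp. $>k$). Let $\mathbf{PQSym}^*$ be the graded dual Hopf algebra of $\mathbf{PQSym}$, with $(\mathbf{G}_{\mathbf a})$ the basis dual to $(\mathbf{F}_{\mathbf a})$. Then the linear map $\mathbf{NCQSym}\to\mathbf{PQSym}^*$, $\mathbf{M}_u\mapsto\sum_{\mathrm{tass}(\mathbf a)=u}\mathbf{G}_{\mathbf a}$ (sum over parking functions $\mathbf a$), is an injective morphism of Hopf algebras.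
   Context: $\mathbb{K}$ is a field of characteristic $0$, $A=\{a_1<a_2<\cdots\}$, and $\mathbb{K}\langle A\rangle=\varprojlim \mathbb{K}\langle a_1,\dots,a_n\rangle$. For a word $w$ whose distinct letters are $b_1<\dots<b_r$, $\mathrm{tass}(w)$ is the image of $w$ under the monoid morphism $b_j\mapsto j$; $w$ is packed if $\mathrm{tass}(w)=w$. A parking function of length $n$ is a word $\mathbf a$ of length $n$ over positive integers whose nondecreasing rearrangement $b_1\le\dots\le b_n$ satisfies $b_i\le i$ for all $i$. Parkization: for a word $w$ of length $n$ over positive integers let $d(w)=\min\{i : |\{j: w_j\le i\}|<i\}$; if $d(w)=n+1$ then $\mathrm{park}(w)=w$; otherwise let $w'$ be obtained from $w$ by decreasing by $1$ every letter $>d(w)$, and set $\mathrm{park}(w)=\mathrm{park}(w')$. $\mathbf{PQSym}$ is the Hopf algebra with basis $(\mathbf F_{\mathbf a})$ indexed by parking functions, product $\mathbf F_{\mathbf a'}\mathbf F_{\mathbf a''}=\sum_{\mathbf a\in \mathbf a'\,\sqcup\!\sqcup\,(\mathbf a''[n'])}\mathbf F_{\mathbf a}$, where $n'$ is the length of $\mathbf a'$, $\mathbf a''[n']$ is $\mathbf a''$ with $n'$ added to each letter and $\sqcup\!\sqcup$ is the shuffle product, and coproduct $\Delta\mathbf F_{\mathbf a}=\sum_{\mathbf a=uv}\mathbf F_{\mathrm{park}(u)}\otimes\mathbf F_{\mathrm{park}(v)}$ (sum over factorizations of $\mathbf a$ as a concatenation of two possibly empty words). *)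

theory Defs
  imports Main
begin

text \<open>Letters a_i are identified with positive integers i; words are nat lists.\<close>

definition pos_word :: "nat list \<Rightarrow> bool" where
  "pos_word w \<longleftrightarrow> (\<forall>x\<in>set w. 0 < x)"

definition tass :: "nat list \<Rightarrow> nat list" where
  "tass w = map (\<lambda>x. card {y \<in> set w. y \<le> x}) w"

definition packed :: "nat list \<Rightarrow> bool" where
  "packed w \<longleftrightarrow> tass w = w"

text \<open>Parking function: positive letters, nondecreasing rearrangement b with b_i \<le> i (1-indexed).\<close>
definition parking :: "nat list \<Rightarrow> bool" where
  "parking a \<longleftrightarrow> pos_word a \<and> (\<forall>i<length a. sort a ! i \<le> Suc i)"

definition dpark :: "nat list \<Rightarrow> nat" where
  "dpark w = (LEAST i. card {j. j < length w \<and> w ! j \<le> i} < i)"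

lemma dpark_le: "dpark w \<le> length w + 1"
proof -
  have "card {j. j < length w \<and> w ! j \<le> length w + 1} \<le> card {..<length w}"
    by (rule card_mono) auto
  then have "card {j. j < length w \<and> w ! j \<le> length w + 1} < length w + 1" by simp
  then show ?thesis unfolding dpark_def by (rule Least_le)
qed

lemma dpark_big:
  assumes "dpark w \<noteq> length w + 1"
  shows "\<exists>j<length w. dpark w < w ! j"
proof (rule ccontr)
  assume "\<not> ?thesis"
  then have "{j. j < length w \<and> w ! j \<le> dpark w} = {..<length w}" by auto
  moreover have "card {j. j < length w \<and> w ! j \<le> dpark w} < dpark w"
  proof -
    have "card {j. j < length w \<and> w ! j \<le> length w + 1} \<le> card {..<length w}"
      by (rule card_mono) auto
    then have "card {j. j < length w \<and> w ! j \<le> length w + 1} < length w + 1" by simp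
    then have "\<exists>i. card {j. j < length w \<and> w ! j \<le> i} < i" by blast
    then show ?thesis unfolding dpark_def by (rule LeastI_ex)
  qed
  ultimately have "length w < dpark w" by simp
  with dpark_le[of w] assms show False by simp
qed

lemma park_decr:
  assumes "dpark w \<noteq> length w + 1"
  shows "sum_list (map (\<lambda>x. if dpark w < x then x - 1 else x) w) < sum_list w"
proof -
  obtain j where j: "j < length w" "dpark w < w ! j" using dpark_big[OF assms] by blast
  let ?f = "\<lambda>x. if dpark w < x then x - 1 else x"
  have "sum_list (map ?f w) = (\<Sum>i<length w. ?f (w ! i))"
    by (simp add: sum_list_sum_nth atLeast0LessThan)
  also have "\<dots> < (\<Sum>i<length w. w ! i)"
    by (rule sum_strict_mono_ex1) (use j in auto)
  also have "\<dots> = sum_list w" by (simp add: sum_list_sum_nth atLeast0LessThan)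
  finally show ?thesis .
qed

function park :: "nat list \<Rightarrow> nat list" where
  "park w = (if dpark w = length w + 1 then w
             else park (map (\<lambda>x. if dpark w < x then x - 1 else x) w))"
  by auto
termination
  by (relation "measure sum_list") (use park_decr in auto)

declare park.simps[simp del]

text \<open>Elements of PQSym^* (and of its tensor square) are given by their coefficient
  functions in the basis (G_a) (resp. (G_b \<otimes> G_c)), finitely supported on parking functions.\<close>

definition shift :: "nat \<Rightarrow> nat list \<Rightarrow> nat list" where
  "shift n c = map (\<lambda>x. x + n) c"

text \<open>Structure constant of the coproduct of PQSym: coefficient of F_b \<otimes> F_c in \<Delta> F_a.\<close>
definition pq_coprod_coeff :: "nat list \<Rightarrow> nat list \<Rightarrow> nat list \<Rightarrow> nat" where
  "pq_coprod_coeff a b c =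
     card {i. i \<le> length a \<and> park (take i a) = b \<and> park (drop i a) = c}"

text \<open>Structure constant of the product of PQSym: coefficient of F_a in F_b F_c
  (shuffles of b and c[n'] are pairwise distinct, their letters being disjoint).\<close>
definition pq_prod_coeff :: "nat list \<Rightarrow> nat list \<Rightarrow> nat list \<Rightarrow> nat" where
  "pq_prod_coeff b c a = (if a \<in> shuffles b (shift (length b) c) then 1 else 0)"

definition pqd_elem :: "(nat list \<Rightarrow> 'k::field) \<Rightarrow> bool" where
  "pqd_elem x \<longleftrightarrow> finite {a. x a \<noteq> 0} \<and> (\<forall>a. x a \<noteq> 0 \<longrightarrow> parking a)"

definition pqd_mult :: "(nat list \<Rightarrow> 'k::field) \<Rightarrow> (nat list \<Rightarrow> 'k) \<Rightarrow> nat list \<Rightarrow> 'k" where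
  "pqd_mult x y = (\<lambda>a. if parking a then
      (\<Sum>b\<in>{b. x b \<noteq> 0}. \<Sum>c\<in>{c. y c \<noteq> 0}. x b * y c * of_nat (pq_coprod_coeff a b c))
     else 0)"

definition pqd_coprod :: "(nat list \<Rightarrow> 'k::field) \<Rightarrow> nat list \<times> nat list \<Rightarrow> 'k" where
  "pqd_coprod x = (\<lambda>(b, c). if parking b \<and> parking c then
      (\<Sum>a\<in>{a. x a \<noteq> 0}. x a * of_nat (pq_prod_coeff b c a)) else 0)"

definition pqd_unit :: "nat list \<Rightarrow> 'k::field" where
  "pqd_unit = (\<lambda>a. if a = [] then 1 else 0)"

definition pqd_counit :: "(nat list \<Rightarrow> 'k::field) \<Rightarrow> 'k" where
  "pqd_counit x = x []"

text \<open>Series in K<A>: functions from words to K (only words with positive letters matter).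
  Product: the (Cauchy) product of noncommutative series.\<close>
definition ser_mult :: "(nat list \<Rightarrow> 'k::field) \<Rightarrow> (nat list \<Rightarrow> 'k) \<Rightarrow> nat list \<Rightarrow> 'k" where
  "ser_mult f g = (\<lambda>w. \<Sum>i\<le>length w. f (take i w) * g (drop i w))"

definition Mser :: "nat list \<Rightarrow> nat list \<Rightarrow> 'k::field" where
  "Mser u = (\<lambda>w. if pos_word w \<and> tass w = u then 1 else 0)"

text \<open>Elements of NCQSym are given by coefficient functions in the basis (M_u),
  finitely supported on packed words.\<close>
definition ncq_elem :: "(nat list \<Rightarrow> 'k::field) \<Rightarrow> bool" where
  "ncq_elem c \<longleftrightarrow> finite {u. c u \<noteq> 0} \<and> (\<forall>u. c u \<noteq> 0 \<longrightarrow> packed u)"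

definition ncq_ser :: "(nat list \<Rightarrow> 'k::field) \<Rightarrow> nat list \<Rightarrow> 'k" where
  "ncq_ser c = (\<lambda>w. \<Sum>u\<in>{u. c u \<noteq> 0}. c u * Mser u w)"

definition maxletter :: "nat list \<Rightarrow> nat" where
  "maxletter u = Max (insert 0 (set u))"

definition ncq_coprod :: "(nat list \<Rightarrow> 'k::field) \<Rightarrow> nat list \<times> nat list \<Rightarrow> 'k" where
  "ncq_coprod c = (\<lambda>(v, w). \<Sum>u\<in>{u. c u \<noteq> 0}. c u * of_nat (card
      {k. k \<le> maxletter u \<and> filter (\<lambda>x. x \<le> k) u = v \<and> tass (filter (\<lambda>x. k < x) u) = w}))"

definition ncq_unit :: "nat list \<Rightarrow> 'k::field" where
  "ncq_unit = (\<lambda>u. if u = [] then 1 else 0)"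

definition ncq_counit :: "(nat list \<Rightarrow> 'k::field) \<Rightarrow> 'k" where
  "ncq_counit c = c []"

text \<open>Linear extension of M_u \<mapsto> \<Sum>_{tass(a)=u} G_a (a parking function): the coefficient
  of G_a in the image of \<Sum>_u c_u M_u is c_{tass a}.\<close>
definition phi :: "(nat list \<Rightarrow> 'k::field) \<Rightarrow> nat list \<Rightarrow> 'k" where
  "phi c = (\<lambda>a. if parking a then c (tass a) else 0)"

text \<open>phi \<otimes> phi on coefficient functions of tensors in the bases M_v \<otimes> M_w and G_b \<otimes> G_c.\<close>
definition phi2 :: "(nat list \<times> nat list \<Rightarrow> 'k::field) \<Rightarrow> nat list \<times> nat list \<Rightarrow> 'k" where
  "phi2 T = (\<lambda>(b, c). if parking b \<and> parking c then T (tass b, tass c) else 0)"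

end

theory Submission
  imports Defs
begin

definition rk :: "nat list \<Rightarrow> nat \<Rightarrow> nat" where
  "rk w x = card {y \<in> set w. y \<le> x}"

lemma tass_rk: "tass w = map (rk w) w"
  by (simp add: tass_def rk_def)

lemma rk_mono: "strict_mono_on (set w) (rk w)"
proof (rule strict_mono_onI)
  fix r s assume rs: "r \<in> set w" "s \<in> set w" "r < s"
  have "{y \<in> set w. y \<le> r} \<subset> {y \<in> set w. y \<le> s}"
  proof (rule psubsetI)
    show "{y \<in> set w. y \<le> r} \<subseteq> {y \<in> set w. y \<le> s}" using rs by auto
    have "s \<in> {y \<in> set w. y \<le> s}" "s \<notin> {y \<in> set w. y \<le> r}" using rs by auto
    then show "{y \<in> set w. y \<le> r} \<noteq> {y \<in> set w. y \<le> s}" by blast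
  qed
  then show "rk w r < rk w s" unfolding rk_def by (simp add: psubset_card_mono)
qed

lemma tass_map_mono:
  fixes f :: "nat \<Rightarrow> nat"
  assumes "strict_mono_on (set w) f"
  shows "tass (map f w) = tass w"
proof -
  have inj: "inj_on f (set w)" using assms strict_mono_on_imp_inj_on by blast
  have "card {y \<in> f ` set w. y \<le> f x} = card {y \<in> set w. y \<le> x}" if x: "x \<in> set w" for x
  proof -
    have "{y \<in> f ` set w. y \<le> f x} = f ` {y \<in> set w. y \<le> x}"
      using strict_mono_on_less_eq[OF assms _ x] by auto
    moreover have "inj_on f {y \<in> set w. y \<le> x}" using inj by (rule inj_on_subset) auto
    ultimately show ?thesis by (simp add: card_image)
  qed
  then show ?thesis by (simp add: tass_def)
qed

lemma strict_mono_on_sub: "strict_mono_on B f \<Longrightarrow> A \<subseteq> B \<Longrightarrow> strict_mono_on A f"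
  unfolding strict_mono_on_def by blast

lemma rk_range: "x \<in> set w \<Longrightarrow> 1 \<le> rk w x \<and> rk w x \<le> card (set w)"
proof -
  assume x: "x \<in> set w"
  have "x \<in> {y \<in> set w. y \<le> x}" using x by simp
  then have "card {y \<in> set w. y \<le> x} > 0" by (subst card_gt_0_iff) auto
  moreover have "card {y \<in> set w. y \<le> x} \<le> card (set w)" by (rule card_mono) auto
  ultimately show ?thesis unfolding rk_def by simp
qed

lemma set_tass: "set (tass w) = {1..card (set w)}"
proof -
  have inj: "inj_on (rk w) (set w)" using rk_mono strict_mono_on_imp_inj_on by blast
  have sub: "rk w ` set w \<subseteq> {1..card (set w)}" using rk_range by auto
  have "card (rk w ` set w) = card {1..card (set w)}" using inj by (simp add: card_image)
  then have "rk w ` set w = {1..card (set w)}" using sub by (intro card_subset_eq) auto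
  then show ?thesis by (simp add: tass_rk)
qed

lemma tass_tass: "tass (tass w) = tass w"
proof -
  have "tass (map (rk w) w) = tass w" by (rule tass_map_mono[OF rk_mono])
  then show ?thesis using tass_rk[of w] by metis
qed

lemma packed_tass: "packed (tass w)"
  unfolding packed_def by (rule tass_tass)

lemma packed_iff: "packed u \<longleftrightarrow> set u = {1..card (set u)}"
proof
  assume "packed u" then show "set u = {1..card (set u)}"
    by (metis packed_def set_tass)
next
  assume h: "set u = {1..card (set u)}"
  have "rk u x = x" if "x \<in> set u" for x
  proof -
    have xc: "x \<le> card (set u)" using h that by (metis atLeastAtMost_iff)
    have "{y \<in> set u. y \<le> x} = {1..x}" using xc by (subst h) auto
    then show ?thesis by (simp add: rk_def)
  qed
  then show "packed u" unfolding packed_def tass_rk by (simp add: map_idI)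
qed

lemma tass_take: "tass (take i (tass w)) = tass (take i w)"
  unfolding tass_rk[of w] take_map
  by (rule tass_map_mono, rule strict_mono_on_sub[OF rk_mono]) (rule set_take_subset)

lemma tass_drop: "tass (drop i (tass w)) = tass (drop i w)"
  unfolding tass_rk[of w] drop_map
  by (rule tass_map_mono, rule strict_mono_on_sub[OF rk_mono]) (rule set_drop_subset)

lemma length_tass[simp]: "length (tass w) = length w"
  by (simp add: tass_def)

lemma tass_Nil_iff[simp]: "tass w = [] \<longleftrightarrow> w = []"
  by (simp add: tass_def)

lemma packed_set_le: "packed u \<Longrightarrow> set u \<subseteq> {1..length u}"
proof
  fix x assume "packed u" "x \<in> set u"
  then have "x \<in> {1..card (set u)}" using packed_iff[of u] by blast
  then show "x \<in> {1..length u}" using card_length[of u] by auto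
qed

lemma finite_bounded_lists: "finite {u :: nat list. length u = n \<and> set u \<subseteq> {..n}}"
proof -
  have "{u :: nat list. length u = n \<and> set u \<subseteq> {..n}} = {u. set u \<subseteq> {..n} \<and> length u = n}" by auto
  then show ?thesis using finite_lists_length_eq[of "{..n}" n] by simp
qed

lemma parking_set: "parking a \<Longrightarrow> set a \<subseteq> {1..length a}"
proof
  fix x assume p: "parking a" and x: "x \<in> set a"
  then have "0 < x" by (simp add: parking_def pos_word_def)
  from x have "x \<in> set (sort a)" by simp
  then obtain i where i: "i < length a" "sort a ! i = x" by (metis in_set_conv_nth length_sort)
  have "x \<le> Suc i" using p i unfolding parking_def by auto
  with i \<open>0 < x\<close> show "x \<in> {1..length a}" by auto
qed

lemma sorted_packed_bound:
  assumes s: "sorted s" and st: "set s = {1..m}" and k: "k < length s"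
  shows "s ! k \<le> Suc k"
  using k
proof (induction k)
  case 0
  then have "s ! 0 \<in> set s" by simp
  then have "1 \<in> set s" using st by auto
  then obtain j where j: "j < length s" "s ! j = 1" by (metis in_set_conv_nth)
  then have "s ! 0 \<le> s ! j" using s by (intro sorted_nth_mono) auto
  then show ?case using j by simp
next
  case (Suc k)
  then have IH: "s ! k \<le> Suc k" by simp
  have "s ! Suc k \<le> Suc (s ! k)"
  proof (rule ccontr)
    assume c: "\<not> ?thesis"
    have "s ! Suc k \<in> set s" using Suc.prems by simp
    then have "s ! Suc k \<le> m" using st by auto
    then have "Suc (s ! k) \<in> set s" using st c by auto
    then obtain j where j: "j < length s" "s ! j = Suc (s ! k)" by (metis in_set_conv_nth)
    show False
    proof (cases "j \<le> k")
      case True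
      then have "s ! j \<le> s ! k" using s Suc.prems by (intro sorted_nth_mono) auto
      then show False using j by simp
    next
      case False
      then have "s ! Suc k \<le> s ! j" using s j by (intro sorted_nth_mono) auto
      then show False using j c by simp
    qed
  qed
  then show ?case using IH by simp
qed

lemma packed_parking: "packed u \<Longrightarrow> parking u"
proof -
  assume p: "packed u"
  then have st: "set u = {1..card (set u)}" by (simp add: packed_iff)
  have pos: "pos_word u" unfolding pos_word_def using st by (metis atLeastAtMost_iff less_eq_Suc_le One_nat_def)
  have "sort u ! i \<le> Suc i" if "i < length u" for i
    by (rule sorted_packed_bound[where m = "card (set u)"]) (use st that in auto)
  then show ?thesis using pos by (simp add: parking_def)
qed

lemma length_filter_sort: "length (filter P (sort w)) = length (filter P (w::nat list))"
  by (simp add: filter_sort)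

lemma park_props: "pos_word w \<Longrightarrow> parking (park w) \<and> tass (park w) = tass w"
proof (induction w rule: park.induct)
  case (1 w)
  define D where "D = dpark w"
  define n where "n = length w"
  define cnt where "cnt i = card {j. j < length w \<and> w ! j \<le> i}" for i
  have ex: "\<exists>i. cnt i < i"
  proof -
    have "cnt (n + 1) \<le> card {..<n}" unfolding cnt_def n_def by (rule card_mono) auto
    then show ?thesis by (intro exI[of _ "n+1"]) simp
  qed
  have D_eq: "D = (LEAST i. cnt i < i)" unfolding D_def dpark_def cnt_def by simp
  have cD: "cnt D < D" unfolding D_eq by (rule LeastI_ex[OF ex])
  have lt: "i \<le> cnt i" if "i < D" for i
    using not_less_Least[of i "\<lambda>i. cnt i < i"] that unfolding D_eq by simp
  show ?case
  proof (cases "D = n + 1")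
    case True
    then have pw: "park w = w" by (simp add: park.simps D_def n_def)
    have "sort w ! k \<le> Suc k" if k: "k < n" for k
    proof (rule ccontr)
      assume c: "\<not> ?thesis"
      have "Suc k \<le> cnt (Suc k)" using lt[of "Suc k"] True k by simp
      also have "cnt (Suc k) = length (filter (\<lambda>x. x \<le> Suc k) w)"
        unfolding cnt_def length_filter_conv_card by simp
      also have "\<dots> = length (filter (\<lambda>x. x \<le> Suc k) (sort w))"
        by (rule length_filter_sort[symmetric])
      also have "\<dots> = card {j. j < n \<and> sort w ! j \<le> Suc k}"
        unfolding length_filter_conv_card n_def by simp
      also have "\<dots> \<le> card {..<k}"
      proof (rule card_mono)
        show "{j. j < n \<and> sort w ! j \<le> Suc k} \<subseteq> {..<k}"
        proof
          fix j assume j: "j \<in> {j. j < n \<and> sort w ! j \<le> Suc k}"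
          show "j \<in> {..<k}"
          proof (rule ccontr)
            assume "j \<notin> {..<k}"
            then have "sort w ! k \<le> sort w ! j" using j by (intro sorted_nth_mono) (auto simp: n_def)
            then show False using j c by simp
          qed
        qed
      qed simp
      finally show False by simp
    qed
    then have "parking w" using "1.prems" by (simp add: parking_def n_def)
    then show ?thesis using pw by simp
  next
    case False
    define f where "f x = (if D < x then x - 1 else (x::nat))" for x
    have D1: "1 \<le> D" using cD by (cases D) auto
    have Dnot: "D \<notin> set w"
    proof
      assume "D \<in> set w"
      then obtain j0 where j0: "j0 < n" "w ! j0 = D" by (metis in_set_conv_nth n_def)
      have "D - 1 \<le> cnt (D - 1)" using lt[of "D - 1"] D1 by simp
      also have "cnt (D - 1) < cnt D"
        unfolding cnt_def
      proof (rule psubset_card_mono)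
        show "{j. j < length w \<and> w ! j \<le> D - 1} \<subset> {j. j < length w \<and> w ! j \<le> D}"
        proof (rule psubsetI)
          show "{j. j < length w \<and> w ! j \<le> D - 1} \<subseteq> {j. j < length w \<and> w ! j \<le> D}" by auto
          have "j0 \<in> {j. j < length w \<and> w ! j \<le> D}" "j0 \<notin> {j. j < length w \<and> w ! j \<le> D - 1}"
            using j0 D1 by (auto simp: n_def)
          then show "{j. j < length w \<and> w ! j \<le> D - 1} \<noteq> {j. j < length w \<and> w ! j \<le> D}" by blast
        qed
      qed simp
      finally show False using cD by simp
    qed
    have mono: "strict_mono_on (set w) f"
    proof (rule strict_mono_onI)
      fix r s assume "r \<in> set w" "s \<in> set w" "r < s"
      moreover have "r \<noteq> D" "s \<noteq> D" using Dnot \<open>r \<in> set w\<close> \<open>s \<in> set w\<close> by auto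
      ultimately show "f r < f s" unfolding f_def by (cases "D < r"; cases "D < s") auto
    qed
    have pos': "pos_word (map f w)"
      using "1.prems" D1 unfolding pos_word_def f_def by auto
    have pw: "park w = park (map f w)"
      using False by (simp add: park.simps[of w] D_def n_def f_def[abs_def])
    have "parking (park (map f w)) \<and> tass (park (map f w)) = tass (map f w)"
      using "1.IH" False pos' unfolding D_def n_def f_def by blast
    then show ?thesis using pw tass_map_mono[OF mono] by simp
  qed
qed

lemma pos_take_drop: "pos_word w \<longleftrightarrow> pos_word (take i w) \<and> pos_word (drop i w)"
proof -
  have "set w = set (take i w) \<union> set (drop i w)"
    by (metis append_take_drop_id set_append)
  then show ?thesis unfolding pos_word_def by blast
qed

lemma parking_pos: "parking a \<Longrightarrow> pos_word a"
  by (simp add: parking_def)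

lemma phi_linear:
  "phi (\<lambda>u. r * c u + s * d u) = (\<lambda>a. r * phi c a + s * (phi d a :: 'k::field))"
  by (auto simp: phi_def)

lemma phi_elem:
  fixes c :: "nat list \<Rightarrow> 'k::field"
  assumes "ncq_elem c" shows "pqd_elem (phi c)"
proof -
  have "{a. phi c a \<noteq> 0} \<subseteq> (\<Union>u\<in>{u. c u \<noteq> 0}. {a :: nat list. length a = length u \<and> set a \<subseteq> {..length u}})"
  proof
    fix a assume "a \<in> {a. phi c a \<noteq> 0}"
    then have p: "parking a" and cu: "c (tass a) \<noteq> 0" by (auto simp: phi_def split: if_splits)
    have "set a \<subseteq> {..length a}" using parking_set[OF p] by auto
    then show "a \<in> (\<Union>u\<in>{u. c u \<noteq> 0}. {a :: nat list. length a = length u \<and> set a \<subseteq> {..length u}})"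
      using cu by (intro UN_I[of "tass a"]) auto
  qed
  moreover have "finite (\<Union>u\<in>{u. c u \<noteq> 0}. {a :: nat list. length a = length u \<and> set a \<subseteq> {..length u}})"
    using assms finite_bounded_lists by (auto simp: ncq_elem_def)
  ultimately have "finite {a. phi c a \<noteq> 0}" by (rule finite_subset)
  then show ?thesis unfolding pqd_elem_def by (auto simp: phi_def split: if_splits)
qed

lemma phi_packed: "packed u \<Longrightarrow> phi c u = c u"
  using packed_parking[of u] by (simp add: phi_def packed_def)

lemma phi_inj: "inj_on (phi :: (nat list \<Rightarrow> 'k::field) \<Rightarrow> _) {c. ncq_elem c}"
proof (rule inj_onI)
  fix c d :: "nat list \<Rightarrow> 'k"
  assume c: "c \<in> {c. ncq_elem c}" and d: "d \<in> {c. ncq_elem c}" and e: "phi c = phi d"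
  show "c = d"
  proof
    fix u show "c u = d u"
    proof (cases "packed u")
      case True
      then show ?thesis using e phi_packed[OF True, of c] phi_packed[OF True, of d] by simp
    next
      case False
      have "c u = 0" using c False unfolding ncq_elem_def by blast
      moreover have "d u = 0" using d False unfolding ncq_elem_def by blast
      ultimately show ?thesis by simp
    qed
  qed
qed

lemma phi_unit: "phi (ncq_unit :: nat list \<Rightarrow> 'k::field) = pqd_unit"
proof
  fix a :: "nat list"
  have "parking []" by (simp add: parking_def pos_word_def)
  then show "phi (ncq_unit :: nat list \<Rightarrow> 'k::field) a = pqd_unit a"
    by (auto simp: phi_def ncq_unit_def pqd_unit_def)
qed

lemma phi_counit: "pqd_counit (phi c) = ncq_counit (c :: nat list \<Rightarrow> 'k::field)"
proof -
  have "parking []" by (simp add: parking_def pos_word_def)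
  then show ?thesis by (simp add: pqd_counit_def ncq_counit_def phi_def tass_def)
qed

lemma ncq_ser_eq:
  fixes c :: "nat list \<Rightarrow> 'k::field"
  assumes "ncq_elem c"
  shows "ncq_ser c w = (if pos_word w then c (tass w) else 0)"
proof -
  have fin: "finite {u. c u \<noteq> 0}" using assms by (simp add: ncq_elem_def)
  have "ncq_ser c w = (\<Sum>u\<in>{u. c u \<noteq> 0}. if tass w = u then (if pos_word w then c u else 0) else 0)"
    unfolding ncq_ser_def Mser_def by (intro sum.cong) auto
  also have "\<dots> = (if tass w \<in> {u. c u \<noteq> 0} then (if pos_word w then c (tass w) else 0) else 0)"
    using fin by (rule sum.delta')
  also have "\<dots> = (if pos_word w then c (tass w) else 0)" by auto
  finally show ?thesis .
qed

lemma sum_supp_delta: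
  fixes f :: "nat list \<Rightarrow> 'k::field"
  assumes "finite {x. f x \<noteq> 0}"
  shows "(\<Sum>b\<in>{x. f x \<noteq> 0}. if t = b then f b * z else 0) = f t * z"
  using sum.delta'[OF assms, of t "\<lambda>b. f b * z"] by auto

lemma sum_supp_delta2:
  fixes f :: "nat list \<Rightarrow> 'k::field"
  assumes "finite {x. f x \<noteq> 0}"
  shows "(\<Sum>b\<in>{x. f x \<noteq> 0}. if t = b then z * f b else 0) = z * f t"
  using sum.delta'[OF assms, of t "\<lambda>b. z * f b"] by auto

lemma park_phi:
  fixes c :: "nat list \<Rightarrow> 'k::field"
  assumes "pos_word w"
  shows "phi c (park w) = c (tass w)"
  using park_props[OF assms] by (simp add: phi_def)

lemma prod_part:
  fixes c d :: "nat list \<Rightarrow> 'k::field"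
  assumes c: "ncq_elem c" and d: "ncq_elem d"
  shows "\<exists>e. ncq_elem e \<and> ncq_ser e = ser_mult (ncq_ser c) (ncq_ser d)
                 \<and> phi e = pqd_mult (phi c) (phi d)"
proof -
  define P where "P u = (\<Sum>i\<le>length u. c (tass (take i u)) * d (tass (drop i u)))" for u
  define e where "e u = (if packed u then P u else 0)" for u
  have fc: "finite {u. c u \<noteq> 0}" and fd: "finite {u. d u \<noteq> 0}"
    using c d by (auto simp: ncq_elem_def)
  have sub: "{u. e u \<noteq> 0} \<subseteq> (\<Union>x\<in>{u. c u \<noteq> 0}. \<Union>y\<in>{u. d u \<noteq> 0}.
       {u :: nat list. length u = length x + length y \<and> set u \<subseteq> {..length x + length y}})"
  proof
    fix u assume "u \<in> {u. e u \<noteq> 0}"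
    then have pk: "packed u" and Pu: "P u \<noteq> 0" by (auto simp: e_def split: if_splits)
    from Pu obtain i where i: "i \<in> {..length u}" and nz: "c (tass (take i u)) * d (tass (drop i u)) \<noteq> 0"
      unfolding P_def by (rule sum.not_neutral_contains_not_neutral)
    define x where "x = tass (take i u)"
    define y where "y = tass (drop i u)"
    have len: "length x + length y = length u" using i by (simp add: x_def y_def)
    have "set u \<subseteq> {..length u}" using packed_set_le[OF pk] by auto
    then have m: "u \<in> {u' :: nat list. length u' = length x + length y \<and> set u' \<subseteq> {..length x + length y}}"
      using len by simp
    have "c x \<noteq> 0" "d y \<noteq> 0" using nz by (auto simp: x_def y_def)
    then show "u \<in> (\<Union>x\<in>{u. c u \<noteq> 0}. \<Union>y\<in>{u. d u \<noteq> 0}.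
       {u :: nat list. length u = length x + length y \<and> set u \<subseteq> {..length x + length y}})"
      using m by blast
  qed
  have "finite {u. e u \<noteq> 0}"
    by (rule finite_subset[OF sub]) (intro finite_UN_I fc fd finite_bounded_lists)
  then have ee: "ncq_elem e" unfolding ncq_elem_def e_def by auto
  have Ptass: "P (tass w) = P w" for w
    unfolding P_def by (simp add: tass_take tass_drop)
  have ser: "ncq_ser e = ser_mult (ncq_ser c) (ncq_ser d)"
  proof
    fix w
    show "ncq_ser e w = ser_mult (ncq_ser c) (ncq_ser d) w"
    proof (cases "pos_word w")
      case True
      then have "ncq_ser e w = P w" using ncq_ser_eq[OF ee] packed_tass[of w] Ptass[of w] by (simp add: e_def)
      also have "\<dots> = ser_mult (ncq_ser c) (ncq_ser d) w"
        unfolding P_def ser_mult_def using True pos_take_drop[of w]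
        by (intro sum.cong) (auto simp: ncq_ser_eq[OF c] ncq_ser_eq[OF d])
      finally show ?thesis .
    next
      case False
      then show ?thesis
        unfolding ser_mult_def using pos_take_drop[of w]
        by (auto simp: ncq_ser_eq[OF c] ncq_ser_eq[OF d] ncq_ser_eq[OF ee] intro!: sum.neutral)
    qed
  qed
  have ph: "phi e = pqd_mult (phi c) (phi d)"
  proof
    fix a
    show "phi e a = pqd_mult (phi c) (phi d) a"
    proof (cases "parking a")
      case False then show ?thesis by (simp add: phi_def pqd_mult_def)
    next
      case True
      have pa: "pos_word a" using True by (rule parking_pos)
      have pt: "pos_word (take i a)" "pos_word (drop i a)" for i using pa pos_take_drop by blast+
      have fpc: "finite {x. phi c x \<noteq> 0}" and fpd: "finite {x. phi d x \<noteq> 0}"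
        using phi_elem[OF c] phi_elem[OF d] by (auto simp: pqd_elem_def)
      have "phi e a = P a" using True packed_tass[of a] Ptass[of a] by (simp add: phi_def e_def)
      also have "\<dots> = (\<Sum>i\<le>length a. phi c (park (take i a)) * phi d (park (drop i a)))"
        unfolding P_def using pt by (simp add: park_phi)
      also have "\<dots> = (\<Sum>i\<le>length a. \<Sum>b\<in>{x. phi c x \<noteq> 0}. \<Sum>b'\<in>{x. phi d x \<noteq> 0}.
           (if park (take i a) = b then (if park (drop i a) = b' then phi c b * phi d b' else 0) else 0))"
      proof (rule sum.cong[OF refl])
        fix i
        have "(\<Sum>b\<in>{x. phi c x \<noteq> 0}. \<Sum>b'\<in>{x. phi d x \<noteq> 0}.
           (if park (take i a) = b then (if park (drop i a) = b' then phi c b * phi d b' else 0) else 0))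
          = (\<Sum>b\<in>{x. phi c x \<noteq> 0}. (if park (take i a) = b then phi c b * phi d (park (drop i a)) else 0))"
        proof (rule sum.cong[OF refl])
          fix b
          have "(\<Sum>b'\<in>{x. phi d x \<noteq> 0}. if park (drop i a) = b' then phi c b * phi d b' else 0)
                = phi c b * phi d (park (drop i a))"
            by (rule sum_supp_delta2[OF fpd])
          then show "(\<Sum>b'\<in>{x. phi d x \<noteq> 0}.
             (if park (take i a) = b then (if park (drop i a) = b' then phi c b * phi d b' else 0) else 0))
             = (if park (take i a) = b then phi c b * phi d (park (drop i a)) else 0)"
            by (cases "park (take i a) = b") simp_all
        qed
        also have "\<dots> = phi c (park (take i a)) * phi d (park (drop i a))"
          by (rule sum_supp_delta[OF fpc])
        finally show "phi c (park (take i a)) * phi d (park (drop i a)) = (\<Sum>b\<in>{x. phi c x \<noteq> 0}. \<Sum>b'\<in>{x. phi d x \<noteq> 0}.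
           (if park (take i a) = b then (if park (drop i a) = b' then phi c b * phi d b' else 0) else 0))" by simp
      qed
      also have "\<dots> = (\<Sum>b\<in>{x. phi c x \<noteq> 0}. \<Sum>b'\<in>{x. phi d x \<noteq> 0}. \<Sum>i\<le>length a.
           (if park (take i a) = b then (if park (drop i a) = b' then phi c b * phi d b' else 0) else 0))"
        by (subst sum.swap) (subst (2) sum.swap, rule refl)
      also have "\<dots> = (\<Sum>b\<in>{x. phi c x \<noteq> 0}. \<Sum>b'\<in>{x. phi d x \<noteq> 0}.
           phi c b * phi d b' * of_nat (pq_coprod_coeff a b b'))"
      proof (intro sum.cong[OF refl])
        fix b b'
        have "(\<Sum>i\<le>length a. (if park (take i a) = b then (if park (drop i a) = b' then phi c b * phi d b' else 0) else 0))
           = (\<Sum>i\<le>length a. phi c b * phi d b' * of_bool (park (take i a) = b \<and> park (drop i a) = b'))"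
          by (intro sum.cong) auto
        also have "\<dots> = phi c b * phi d b' * (\<Sum>i\<le>length a. of_bool (park (take i a) = b \<and> park (drop i a) = b'))"
          by (simp add: sum_distrib_left)
        also have "(\<Sum>i\<le>length a. of_bool (park (take i a) = b \<and> park (drop i a) = b') :: 'k)
            = of_nat (pq_coprod_coeff a b b')"
        proof -
          have "{..length a} \<inter> {i. park (take i a) = b \<and> park (drop i a) = b'}
             = {i. i \<le> length a \<and> park (take i a) = b \<and> park (drop i a) = b'}" by auto
          then show ?thesis by (simp add: pq_coprod_coeff_def)
        qed
        finally show "(\<Sum>i\<le>length a. (if park (take i a) = b then (if park (drop i a) = b' then phi c b * phi d b' else 0) else 0))
           = phi c b * phi d b' * of_nat (pq_coprod_coeff a b b')" .
      qed
      also have "\<dots> = pqd_mult (phi c) (phi d) a" using True by (simp add: pqd_mult_def)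
      finally show ?thesis .
    qed
  qed
  show ?thesis using ee ser ph by blast
qed

lemma inv_mono:
  fixes f :: "nat \<Rightarrow> nat"
  assumes m: "strict_mono_on A f"
  shows "strict_mono_on (f ` A) (inv_into A f)"
proof (rule strict_mono_onI)
  fix r s assume r: "r \<in> f ` A" and s: "s \<in> f ` A" and rs: "r < s"
  have ra: "inv_into A f r \<in> A" and sa: "inv_into A f s \<in> A" using r s by (auto intro: inv_into_into)
  show "inv_into A f r < inv_into A f s"
  proof (rule ccontr)
    assume "\<not> ?thesis"
    then have "inv_into A f s \<le> inv_into A f r" by simp
    then have "f (inv_into A f s) \<le> f (inv_into A f r)"
      using strict_mono_on_less_eq[OF m sa ra] by simp
    then show False using f_inv_into_f[OF r] f_inv_into_f[OF s] rs by simp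
  qed
qed

lemma rk_image: "rk w ` set w = {1..card (set w)}"
  using set_tass[of w] by (simp add: tass_rk)

lemma rk_inj: "inj_on (rk w) (set w)"
  using rk_mono strict_mono_on_imp_inj_on by blast

lemma maxletter_packed: "packed u \<Longrightarrow> maxletter u = card (set u)"
proof -
  assume "packed u"
  then have st: "set u = {1..card (set u)}" by (simp add: packed_iff)
  have mem: "card (set u) \<in> insert 0 (set u)"
  proof (cases "card (set u) = 0")
    case True then show ?thesis by simp
  next
    case False then have "card (set u) \<in> {1..card (set u)}"
      by (metis One_nat_def Suc_leI atLeastAtMost_iff le_refl neq0_conv)
    then show ?thesis using st by blast
  qed
  have le: "y \<le> card (set u)" if "y \<in> insert 0 (set u)" for y
  proof -
    have "y = 0 \<or> y \<in> {1..card (set u)}" using that st by blast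
    then show ?thesis by auto
  qed
  show ?thesis unfolding maxletter_def
    by (rule Max_eqI) (use mem le in auto)
qed

lemma count_parking:
  assumes pos: "pos_word w" and cnt: "\<And>i. i \<le> length w \<Longrightarrow> i \<le> length (filter (\<lambda>x. x \<le> i) w)"
  shows "parking w"
proof -
  have "sort w ! k \<le> Suc k" if k: "k < length w" for k
  proof (rule ccontr)
    assume c: "\<not> ?thesis"
    have "Suc k \<le> length (filter (\<lambda>x. x \<le> Suc k) w)" using cnt[of "Suc k"] k by simp
    also have "\<dots> = length (filter (\<lambda>x. x \<le> Suc k) (sort w))"
      by (rule length_filter_sort[symmetric])
    also have "\<dots> = card {j. j < length w \<and> sort w ! j \<le> Suc k}"
      unfolding length_filter_conv_card by simp
    also have "\<dots> \<le> card {..<k}"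
    proof (rule card_mono)
      show "{j. j < length w \<and> sort w ! j \<le> Suc k} \<subseteq> {..<k}"
      proof
        fix j assume j: "j \<in> {j. j < length w \<and> sort w ! j \<le> Suc k}"
        show "j \<in> {..<k}"
        proof (rule ccontr)
          assume "j \<notin> {..<k}"
          then have "sort w ! k \<le> sort w ! j" using j by (intro sorted_nth_mono) auto
          then show False using j c by simp
        qed
      qed
    qed simp
    finally show False by simp
  qed
  then show ?thesis using pos by (simp add: parking_def)
qed

lemma parking_count:
  assumes p: "parking w" and i: "i \<le> length w"
  shows "i \<le> length (filter (\<lambda>x. x \<le> i) w)"
proof -
  have "i = card {..<i}" by simp
  also have "\<dots> \<le> card {j. j < length w \<and> sort w ! j \<le> i}"
  proof (rule card_mono)
    show "{..<i} \<subseteq> {j. j < length w \<and> sort w ! j \<le> i}"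
    proof
      fix j assume "j \<in> {..<i}"
      then have j: "j < i" by simp
      then have "sort w ! j \<le> Suc j" using p i by (simp add: parking_def)
      then show "j \<in> {j. j < length w \<and> sort w ! j \<le> i}" using j i by simp
    qed
  qed simp
  also have "\<dots> = length (filter (\<lambda>x. x \<le> i) (sort w))"
    unfolding length_filter_conv_card by simp
  also have "\<dots> = length (filter (\<lambda>x. x \<le> i) w)" by (rule length_filter_sort)
  finally show ?thesis .
qed

lemma length_filter_shuffle:
  assumes "a \<in> shuffles xs ys"
  shows "length (filter P a) = length (filter P xs) + length (filter P ys)"
proof -
  have "filter P a \<in> filter P ` shuffles xs ys" using assms by blast
  then have "filter P a \<in> shuffles (filter P xs) (filter P ys)" by (simp add: filter_shuffles)
  then show ?thesis by (rule length_shuffles)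
qed

lemma filter_shuffle_split:
  assumes "a \<in> shuffles xs ys" "\<forall>x\<in>set xs. P x" "\<forall>y\<in>set ys. \<not> P y"
  shows "filter P a = xs" "filter (\<lambda>x. \<not> P x) a = ys"
proof -
  have "filter P a \<in> filter P ` shuffles xs ys" using assms by blast
  then have "filter P a \<in> shuffles (filter P xs) (filter P ys)" by (simp add: filter_shuffles)
  moreover have "filter P xs = xs" "filter P ys = []" using assms by auto
  ultimately show "filter P a = xs" by simp
  have "filter (\<lambda>x. \<not> P x) a \<in> filter (\<lambda>x. \<not> P x) ` shuffles xs ys" using assms by blast
  then have "filter (\<lambda>x. \<not> P x) a \<in> shuffles (filter (\<lambda>x. \<not> P x) xs) (filter (\<lambda>x. \<not> P x) ys)"
    by (simp add: filter_shuffles)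
  moreover have "filter (\<lambda>x. \<not> P x) xs = []" "filter (\<lambda>x. \<not> P x) ys = ys" using assms by auto
  ultimately show "filter (\<lambda>x. \<not> P x) a = ys" by simp
qed

lemma shuffle_parking:
  assumes b: "parking b" and cc: "parking cc" and a: "a \<in> shuffles b (shift (length b) cc)"
  shows "parking a"
proof (rule count_parking)
  let ?n = "length b"
  have sb: "set b \<subseteq> {1..?n}" using parking_set[OF b] .
  have scc: "set cc \<subseteq> {1..length cc}" using parking_set[OF cc] .
  have sa: "set a = set b \<union> set (shift ?n cc)" using set_shuffles[OF a] .
  show "pos_word a" using sa sb scc unfolding pos_word_def shift_def by auto
  have la: "length a = ?n + length cc" using length_shuffles[OF a] by (simp add: shift_def)
  fix i assume i: "i \<le> length a"
  have eq: "length (filter (\<lambda>x. x \<le> i) a) = length (filter (\<lambda>x. x \<le> i) b) + length (filter (\<lambda>x. x \<le> i) (shift ?n cc))"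
    by (rule length_filter_shuffle[OF a])
  show "i \<le> length (filter (\<lambda>x. x \<le> i) a)"
  proof (cases "i \<le> ?n")
    case True
    then show ?thesis using eq parking_count[OF b True] by simp
  next
    case False
    have "filter (\<lambda>x. x \<le> i) b = b" using sb False by (intro filter_True) auto
    moreover have "length (filter (\<lambda>x. x \<le> i) (shift ?n cc)) = length (filter (\<lambda>x. x \<le> i - ?n) cc)"
      unfolding shift_def by (simp add: filter_map o_def) (metis (no_types, lifting) False le_diff_conv2 nat_le_linear)
    moreover have "i - ?n \<le> length (filter (\<lambda>x. x \<le> i - ?n) cc)"
      using parking_count[OF cc, of "i - ?n"] i la by simp
    ultimately show ?thesis using eq False by simp
  qed
qed

lemma rk_set_eq: "set v = set w \<Longrightarrow> rk v = rk w"
  unfolding rk_def by (rule ext) simp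

lemma shuffle_tass_inj: "inj_on tass (shuffles xs ys)"
proof (rule inj_onI)
  fix a1 a2 assume a1: "a1 \<in> shuffles xs ys" and a2: "a2 \<in> shuffles xs ys" and e: "tass a1 = tass a2"
  have st: "set a1 = set a2" using set_shuffles[OF a1] set_shuffles[OF a2] by simp
  have "map (rk a1) a1 = map (rk a1) a2" using e rk_set_eq[OF st] by (simp add: tass_rk)
  moreover have "inj_on (rk a1) (set a1 \<union> set a2)" using rk_inj[of a1] st by simp
  ultimately show "a1 = a2" using inj_on_map_eq_map by blast
qed

lemma F3a:
  assumes pk: "packed u" and k: "k \<le> maxletter u" and f: "filter (\<lambda>x. x \<le> k) u = tass b"
  shows "k = card (set b)"
proof -
  have st: "set u = {1..card (set u)}" using pk by (simp add: packed_iff)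
  have km: "k \<le> card (set u)" using k maxletter_packed[OF pk] by simp
  have "set (filter (\<lambda>x. x \<le> k) u) = {x \<in> set u. x \<le> k}" by auto
  also have "\<dots> = {1..k}" using km by (subst st) auto
  finally have "set (tass b) = {1..k}" using f by metis
  then have "card {1..k} = card {1..card (set b)}" using set_tass[of b] by metis
  then show ?thesis by simp
qed

lemma F3b:
  assumes b: "parking b" and cc: "parking cc" and a: "a \<in> shuffles b (shift (length b) cc)"
  shows "card (set b) \<le> maxletter (tass a) \<and> filter (\<lambda>x. x \<le> card (set b)) (tass a) = tass b
     \<and> tass (filter (\<lambda>x. card (set b) < x) (tass a)) = tass cc"
proof -
  define n where "n = length b"
  define sc where "sc = shift n cc"
  define k0 where "k0 = card (set b)"
  have a': "a \<in> shuffles b sc" using a by (simp add: sc_def n_def)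
  have sb: "\<forall>x\<in>set b. x \<le> n" using parking_set[OF b] by (auto simp: n_def)
  have ssc: "\<forall>x\<in>set sc. n < x" using parking_set[OF cc] by (auto simp: sc_def shift_def)
  have sa: "set a = set b \<union> set sc" using set_shuffles[OF a'] .
  have key1: "rk a x = rk b x" if x: "x \<in> set b" for x
  proof -
    have "{y \<in> set a. y \<le> x} = {y \<in> set b. y \<le> x}" using sa ssc sb x by fastforce
    then show ?thesis by (simp add: rk_def)
  qed
  have key2: "k0 < rk a x" if x: "x \<in> set sc" for x
  proof -
    have xb: "x \<notin> set b" using x ssc sb by fastforce
    have "insert x (set b) \<subseteq> {y \<in> set a. y \<le> x}" using sa x ssc sb by fastforce
    then have "card (insert x (set b)) \<le> card {y \<in> set a. y \<le> x}" by (intro card_mono) auto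
    then show ?thesis using xb by (simp add: rk_def k0_def)
  qed
  have filt: "(rk a x \<le> k0) = (x \<le> n)" if x: "x \<in> set a" for x
  proof (cases "x \<in> set b")
    case True
    then show ?thesis using key1[OF True] rk_range[OF True] sb by (simp add: k0_def)
  next
    case False
    then have "x \<in> set sc" using x sa by blast
    then show ?thesis using key2 ssc by fastforce
  qed
  have fs1: "filter (\<lambda>x. x \<le> n) a = b" and fs2: "filter (\<lambda>x. \<not> x \<le> n) a = sc"
  proof -
    have h: "\<forall>y\<in>set sc. \<not> y \<le> n" using ssc by auto
    show "filter (\<lambda>x. x \<le> n) a = b" using filter_shuffle_split(1)[OF a' _ h] sb by blast
    show "filter (\<lambda>x. \<not> x \<le> n) a = sc" using filter_shuffle_split(2)[OF a' _ h] sb by blast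
  qed
  have "filter (\<lambda>j. j \<le> k0) (tass a) = map (rk a) (filter (\<lambda>x. rk a x \<le> k0) a)"
    by (simp add: tass_rk filter_map o_def)
  also have "filter (\<lambda>x. rk a x \<le> k0) a = filter (\<lambda>x. x \<le> n) a"
    using filt by (intro filter_cong) auto
  also have "map (rk a) (filter (\<lambda>x. x \<le> n) a) = tass b"
    using fs1 key1 by (simp add: tass_rk)
  finally have r1: "filter (\<lambda>j. j \<le> k0) (tass a) = tass b" .
  have "filter (\<lambda>j. k0 < j) (tass a) = map (rk a) (filter (\<lambda>x. k0 < rk a x) a)"
    by (simp add: tass_rk filter_map o_def)
  also have "filter (\<lambda>x. k0 < rk a x) a = filter (\<lambda>x. \<not> x \<le> n) a"
  proof (rule filter_cong[OF refl])
    fix x assume "x \<in> set a"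
    then show "(k0 < rk a x) = (\<not> x \<le> n)" using filt[of x] by linarith
  qed
  finally have "filter (\<lambda>j. k0 < j) (tass a) = map (rk a) sc" using fs2 by simp
  then have "tass (filter (\<lambda>j. k0 < j) (tass a)) = tass sc"
    using tass_map_mono[OF strict_mono_on_sub[OF rk_mono[of a]], of sc] sa by auto
  also have "tass sc = tass cc"
    unfolding sc_def shift_def by (rule tass_map_mono) (auto intro: strict_mono_onI)
  finally have r2: "tass (filter (\<lambda>j. k0 < j) (tass a)) = tass cc" .
  have "k0 \<le> card (set a)" unfolding k0_def using sa by (intro card_mono) auto
  also have "card (set a) = maxletter (tass a)"
    using maxletter_packed[OF packed_tass[of a]] set_tass[of a] by simp
  finally show ?thesis using r1 r2 by (simp add: k0_def)
qed

lemma F3c: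
  assumes b: "parking b" and cc: "parking cc" and pk: "packed u" and k: "k \<le> maxletter u"
    and f1: "filter (\<lambda>x. x \<le> k) u = tass b" and f2: "tass (filter (\<lambda>x. k < x) u) = tass cc"
  shows "u \<in> tass ` shuffles b (shift (length b) cc)"
proof -
  define n where "n = length b"
  define sc where "sc = shift n cc"
  have sb: "\<forall>x\<in>set b. x \<le> n" using parking_set[OF b] by (auto simp: n_def)
  have ssc: "\<forall>x\<in>set sc. n < x" using parking_set[OF cc] by (auto simp: sc_def shift_def)
  define m where "m = card (set u)"
  have st: "set u = {1..m}" using pk by (simp add: packed_iff m_def)
  have km: "k \<le> m" using k maxletter_packed[OF pk] by (simp add: m_def)
  have hk: "k = card (set b)" by (rule F3a[OF pk k f1])
  define v where "v = filter (\<lambda>x. k < x) u"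
  have sv: "set v = {Suc k..m}" unfolding v_def using st by auto
  have tv: "tass v = map (\<lambda>x. x - k) v"
    unfolding tass_rk
  proof (rule map_cong[OF refl])
    fix x assume x: "x \<in> set v"
    then have "{y \<in> set v. y \<le> x} = {Suc k..x}" using sv by auto
    then show "rk v x = x - k" by (simp add: rk_def)
  qed
  have tsc: "tass sc = tass cc"
    unfolding sc_def shift_def by (rule tass_map_mono) (auto intro: strict_mono_onI)
  have "map (\<lambda>x. x - k) v = tass sc" using tv f2 tsc by (simp add: v_def)
  then have vsc: "map (\<lambda>x. x - k) v = map (rk sc) sc" by (simp add: tass_rk)
  have "set (tass v) = {1..m - k}" using set_tass[of v] sv by simp
  moreover have "set (tass v) = set (tass sc)" using f2 tsc by (simp add: v_def)
  moreover have "set (tass sc) = rk sc ` set sc" by (simp add: tass_rk)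
  ultimately have Isc: "rk sc ` set sc = {1..m - k}" by simp
  have Ib: "rk b ` set b = {1..k}" using rk_image[of b] hk by simp
  define ib where "ib = inv_into (set b) (rk b)"
  define isc where "isc = inv_into (set sc) (rk sc)"
  define g where "g j = (if j \<le> k then ib j else isc (j - k))" for j
  define a where "a = map g u"
  have gb: "g j \<in> set b" if "j \<in> set u" "j \<le> k" for j
  proof -
    have "j \<in> rk b ` set b" using that st Ib by auto
    then show ?thesis using that by (simp add: g_def ib_def inv_into_into)
  qed
  have gs: "g j \<in> set sc" if "j \<in> set u" "\<not> j \<le> k" for j
  proof -
    have "j - k \<in> rk sc ` set sc" using that st Isc by auto
    then show ?thesis using that by (simp add: g_def isc_def inv_into_into)
  qed
  have gP: "(g j \<le> n) = (j \<le> k)" if "j \<in> set u" for j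
    using gb[OF that] gs[OF that] sb ssc by (cases "j \<le> k") fastforce+
  have "filter (\<lambda>x. x \<le> n) a = map g (filter (\<lambda>j. g j \<le> n) u)"
    by (simp add: a_def filter_map o_def)
  also have "filter (\<lambda>j. g j \<le> n) u = filter (\<lambda>j. j \<le> k) u"
    using gP by (intro filter_cong) auto
  also have "map g (filter (\<lambda>j. j \<le> k) u) = map g (map (rk b) b)" using f1 by (simp add: tass_rk)
  also have "map g (map (rk b) b) = b"
  proof -
    have "g (rk b x) = x" if "x \<in> set b" for x
    proof -
      have "rk b x \<le> k" using rk_range[OF that] hk by simp
      then show ?thesis using that rk_inj[of b] by (simp add: g_def ib_def)
    qed
    then show ?thesis unfolding map_map by (intro map_idI) simp
  qed
  finally have F1: "filter (\<lambda>x. x \<le> n) a = b" .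
  have "filter (\<lambda>x. \<not> x \<le> n) a = map g (filter (\<lambda>j. \<not> g j \<le> n) u)"
    by (simp add: a_def filter_map o_def)
  also have "filter (\<lambda>j. \<not> g j \<le> n) u = v"
    unfolding v_def using gP by (intro filter_cong) auto
  also have "map g v = map isc (map (\<lambda>x. x - k) v)"
    unfolding map_map by (rule map_cong[OF refl]) (use sv in \<open>auto simp: g_def\<close>)
  also have "\<dots> = map isc (map (rk sc) sc)" using vsc by simp
  also have "\<dots> = sc"
  proof -
    have "isc (rk sc x) = x" if "x \<in> set sc" for x
      using that rk_inj[of sc] by (simp add: isc_def)
    then show ?thesis unfolding map_map by (intro map_idI) simp
  qed
  finally have F2: "filter (\<lambda>x. \<not> x \<le> n) a = sc" .
  have ash: "a \<in> shuffles b sc" using partition_in_shuffles[of a "\<lambda>x. x \<le> n"] F1 F2 by simp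
  have mb: "strict_mono_on {1..k} ib" using inv_mono[OF rk_mono[of b]] Ib by (simp add: ib_def)
  have ms: "strict_mono_on {1..m - k} isc" using inv_mono[OF rk_mono[of sc]] Isc by (simp add: isc_def)
  have mono: "strict_mono_on (set u) g"
  proof (rule strict_mono_onI)
    fix r s assume r: "r \<in> set u" and s: "s \<in> set u" and rs: "r < s"
    have r1: "1 \<le> r" "r \<le> m" and s1: "1 \<le> s" "s \<le> m" using r s st by auto
    show "g r < g s"
    proof (cases "s \<le> k")
      case True
      then have "ib r < ib s" using r1 s1 rs by (intro strict_mono_onD[OF mb]) auto
      then show ?thesis using True rs by (simp add: g_def)
    next
      case sF: False
      show ?thesis
      proof (cases "r \<le> k")
        case True
        have "g r \<le> n" using gb[OF r True] sb by blast
        moreover have "n < g s" using gs[OF s sF] ssc by blast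
        ultimately show ?thesis by simp
      next
        case False
        then have "isc (r - k) < isc (s - k)" using r1 s1 rs by (intro strict_mono_onD[OF ms]) auto
        then show ?thesis using False sF by (simp add: g_def)
      qed
    qed
  qed
  have "tass a = u" using tass_map_mono[OF mono] pk by (simp add: a_def packed_def)
  then show ?thesis using ash unfolding sc_def n_def by blast
qed

lemma cardK:
  assumes b: "parking b" and cc: "parking cc" and pk: "packed u"
  shows "card {k. k \<le> maxletter u \<and> filter (\<lambda>x. x \<le> k) u = tass b \<and> tass (filter (\<lambda>x. k < x) u) = tass cc}
       = (if u \<in> tass ` shuffles b (shift (length b) cc) then 1 else 0)"
proof (cases "u \<in> tass ` shuffles b (shift (length b) cc)")
  case True
  then obtain a where a: "a \<in> shuffles b (shift (length b) cc)" and u: "u = tass a" by blast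
  have "{k. k \<le> maxletter u \<and> filter (\<lambda>x. x \<le> k) u = tass b \<and> tass (filter (\<lambda>x. k < x) u) = tass cc}
       = {card (set b)}"
  proof
    show "{k. k \<le> maxletter u \<and> filter (\<lambda>x. x \<le> k) u = tass b \<and> tass (filter (\<lambda>x. k < x) u) = tass cc}
       \<subseteq> {card (set b)}" using F3a[OF pk] by blast
    show "{card (set b)} \<subseteq> {k. k \<le> maxletter u \<and> filter (\<lambda>x. x \<le> k) u = tass b \<and> tass (filter (\<lambda>x. k < x) u) = tass cc}"
      using F3b[OF b cc a] u by simp
  qed
  then show ?thesis using True by simp
next
  case False
  have "{k. k \<le> maxletter u \<and> filter (\<lambda>x. x \<le> k) u = tass b \<and> tass (filter (\<lambda>x. k < x) u) = tass cc} = {}"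
    using F3c[OF b cc pk] False by blast
  then show ?thesis using False by simp
qed

lemma coprod_part:
  fixes c :: "nat list \<Rightarrow> 'k::field"
  assumes c: "ncq_elem c"
  shows "phi2 (ncq_coprod c) = pqd_coprod (phi c)"
proof
  fix p :: "nat list \<times> nat list"
  obtain b cc where p: "p = (b, cc)" by (cases p)
  show "phi2 (ncq_coprod c) p = pqd_coprod (phi c) p"
  proof (cases "parking b \<and> parking cc")
    case False
    have "phi2 (ncq_coprod c) p = 0" using False unfolding p phi2_def by auto
    moreover have "pqd_coprod (phi c) p = 0" using False unfolding p pqd_coprod_def by auto
    ultimately show ?thesis by simp
  next
    case True
    then have b: "parking b" and cc: "parking cc" by auto
    define Sh where "Sh = shuffles b (shift (length b) cc)"
    have fc: "finite {u. c u \<noteq> 0}" using c by (simp add: ncq_elem_def)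
    have pkc: "packed u" if "c u \<noteq> 0" for u using c that by (simp add: ncq_elem_def)
    have fpc: "finite {a. phi c a \<noteq> 0}" using phi_elem[OF c] by (simp add: pqd_elem_def)
    have "phi2 (ncq_coprod c) p = (\<Sum>u\<in>{u. c u \<noteq> 0}. c u * of_nat (card
      {k. k \<le> maxletter u \<and> filter (\<lambda>x. x \<le> k) u = tass b \<and> tass (filter (\<lambda>x. k < x) u) = tass cc}))"
      using True by (simp add: p phi2_def ncq_coprod_def)
    also have "\<dots> = (\<Sum>u\<in>{u. c u \<noteq> 0}. if u \<in> tass ` Sh then c u else 0)"
      by (rule sum.cong[OF refl]) (simp add: cardK[OF b cc pkc] Sh_def)
    also have "\<dots> = (\<Sum>u\<in>{u. c u \<noteq> 0} \<inter> tass ` Sh. c u)"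
      by (rule sum.inter_restrict[OF fc, symmetric])
    also have "{u. c u \<noteq> 0} \<inter> tass ` Sh = tass ` {a \<in> Sh. c (tass a) \<noteq> 0}" by blast
    also have "(\<Sum>u\<in>tass ` {a \<in> Sh. c (tass a) \<noteq> 0}. c u) = (\<Sum>a\<in>{a \<in> Sh. c (tass a) \<noteq> 0}. c (tass a))"
    proof (rule sum.reindex[unfolded o_def])
      show "inj_on tass {a \<in> Sh. c (tass a) \<noteq> 0}"
        by (rule inj_on_subset[OF shuffle_tass_inj]) (auto simp: Sh_def)
    qed
    also have "{a \<in> Sh. c (tass a) \<noteq> 0} = {a. phi c a \<noteq> 0} \<inter> Sh"
      using shuffle_parking[OF b cc] by (auto simp: phi_def Sh_def)
    also have "(\<Sum>a\<in>{a. phi c a \<noteq> 0} \<inter> Sh. c (tass a)) = (\<Sum>a\<in>{a. phi c a \<noteq> 0}. if a \<in> Sh then c (tass a) else 0)"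
      by (rule sum.inter_restrict[OF fpc])
    also have "\<dots> = (\<Sum>a\<in>{a. phi c a \<noteq> 0}. phi c a * of_nat (pq_prod_coeff b cc a))"
    proof (rule sum.cong[OF refl])
      fix a assume "a \<in> {a. phi c a \<noteq> 0}"
      then have "parking a" by (simp add: phi_def split: if_splits)
      then show "(if a \<in> Sh then c (tass a) else 0) = phi c a * of_nat (pq_prod_coeff b cc a)"
        by (simp add: phi_def pq_prod_coeff_def Sh_def)
    qed
    also have "\<dots> = pqd_coprod (phi c) p" using True by (simp add: p pqd_coprod_def)
    finally show ?thesis .
  qed
qed

theorem proposition3p3:
  shows "(\<forall>(c :: nat list \<Rightarrow> 'k::field_char_0) d r s. ncq_elem c \<and> ncq_elem d \<longrightarrow>
            phi (\<lambda>u. r * c u + s * d u) = (\<lambda>a. r * phi c a + s * phi d a))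
       \<and> (\<forall>c :: nat list \<Rightarrow> 'k. ncq_elem c \<longrightarrow> pqd_elem (phi c))
       \<and> inj_on (phi :: (nat list \<Rightarrow> 'k) \<Rightarrow> _) {c. ncq_elem c}
       \<and> (\<forall>(c :: nat list \<Rightarrow> 'k) d. ncq_elem c \<and> ncq_elem d \<longrightarrow>
            (\<exists>e. ncq_elem e \<and> ncq_ser e = ser_mult (ncq_ser c) (ncq_ser d)
                 \<and> phi e = pqd_mult (phi c) (phi d)))
       \<and> phi (ncq_unit :: nat list \<Rightarrow> 'k) = pqd_unit
       \<and> (\<forall>c :: nat list \<Rightarrow> 'k. ncq_elem c \<longrightarrow> phi2 (ncq_coprod c) = pqd_coprod (phi c))
       \<and> (\<forall>c :: nat list \<Rightarrow> 'k. ncq_elem c \<longrightarrow> pqd_counit (phi c) = ncq_counit c)"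
  using phi_linear phi_elem phi_inj prod_part phi_unit coprod_part phi_counit by blast

end
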